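(* Let $\Phi\in\Gamma_0(\mathbb{E})$ be Legendre and let $C\subseteq\mathbb{E}$ be a closed convex set with $C\cap\operatorname{int}\operatorname{dom}\Phi\neq\emptyset$. Assume that $D_\Phi(x,\cdot)$ is coercive for some $x\in\operatorname{dom}\Phi\cap C$. Then the Bregman projection $y\mapsto\operatorname{proj}_\Phi(y,C)$ is continuous on $\operatorname{int}\operatorname{dom}\Phi$.
   Context: $\mathbb{E}$ is a finite-dimensional Euclidean space; $\Gamma_0(\mathbb{E})$ the proper lsc convex functions $\mathbb{E}\to\mathbb{R}\cup\{+\infty\}$. $\Phi$ is Legendre if it is essentially smooth ($\operatorname{int}\operatorname{dom}\Phi\ne\emptyset$, differentiable there, $\|\nabla\Phi(z^\nu)\|\to\infty$ whenever $\operatorname{int}\operatorname{dom}\Phi\ni z^\nu\to z\in\operatorname{bdry}\operatorname{dom}\Phi$) and essentially strictly convex (strictly convex on every convex subset of $\operatorname{dom}\partial\Phi$). $D_\Phi(z_1,z_2)=\Phi(z_1)-\Phi(z_2)-\langle\nabla\Phi(z_2),z_1-z_2\rangle$ if $z_1\in\operatorname{dom}\Phi$, $z_2\in\operatorname{int}\operatorname{dom}\Phi$, and $+\infty$ otherwise. The Bregman projection onto $C$ is $\operatorname{proj}_\Phi(y,C)=\operatorname{argmin}_{x\in C}D_\Phi(x,y)$. It is known (Bauschke–Borwein) that under the stated assumptions on $C$, for every $y\in\operatorname{int}\operatorname{dom}\Phi$ this argmin is a single point lying in $C\cap\operatorname{int}\operatorname{dom}\Phi$, characterized by $\langle\nabla\Phi(\bar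 z)-\nabla\Phi(y),z-\bar z\rangle\ge0$ for all $z\in C$ (with $\bar z\in C\cap\operatorname{int}\operatorname{dom}\Phi$). A function $h$ is coercive if $h(z)\to\infty$ as $\|z\|\to\infty$. *)

theory Defs
  imports "HOL-Analysis.Analysis"
begin

definition edom :: "('a::euclidean_space \<Rightarrow> ereal) \<Rightarrow> 'a set" where
  "edom \<Phi> = {x. \<Phi> x < \<infinity>}"

definition proper_fun :: "('a::euclidean_space \<Rightarrow> ereal) \<Rightarrow> bool" where
  "proper_fun \<Phi> \<longleftrightarrow> (\<forall>x. \<Phi> x \<noteq> -\<infinity>) \<and> edom \<Phi> \<noteq> {}"

definition lsc_fun :: "('a::euclidean_space \<Rightarrow> ereal) \<Rightarrow> bool" where
  "lsc_fun \<Phi> \<longleftrightarrow> (\<forall>x. \<Phi> x \<le> Liminf (at x) \<Phi>)"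

definition convex_fun :: "('a::euclidean_space \<Rightarrow> ereal) \<Rightarrow> bool" where
  "convex_fun \<Phi> \<longleftrightarrow> (\<forall>x y t. 0 \<le> t \<and> t \<le> 1 \<longrightarrow>
      \<Phi> ((1 - t) *\<^sub>R x + t *\<^sub>R y) \<le> ereal (1 - t) * \<Phi> x + ereal t * \<Phi> y)"

definition Gamma0 :: "('a::euclidean_space \<Rightarrow> ereal) \<Rightarrow> bool" where
  "Gamma0 \<Phi> \<longleftrightarrow> proper_fun \<Phi> \<and> lsc_fun \<Phi> \<and> convex_fun \<Phi>"

text \<open>Gradient at an interior point of the domain (real-valued there).\<close>
definition egrad :: "('a::euclidean_space \<Rightarrow> ereal) \<Rightarrow> 'a \<Rightarrow> 'a" where
  "egrad \<Phi> z = (SOME g. ((\<lambda>w. real_of_ereal (\<Phi> w)) has_derivative (\<lambda>h. g \<bullet> h)) (at z))"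

definition subdiff :: "('a::euclidean_space \<Rightarrow> ereal) \<Rightarrow> 'a \<Rightarrow> 'a set" where
  "subdiff \<Phi> x = (if x \<in> edom \<Phi> then
      {g. \<forall>y. \<Phi> y \<ge> \<Phi> x + ereal (g \<bullet> (y - x))} else {})"

definition essentially_smooth :: "('a::euclidean_space \<Rightarrow> ereal) \<Rightarrow> bool" where
  "essentially_smooth \<Phi> \<longleftrightarrow>
     interior (edom \<Phi>) \<noteq> {} \<and>
     (\<forall>z \<in> interior (edom \<Phi>). (\<lambda>w. real_of_ereal (\<Phi> w)) differentiable (at z)) \<and>
     (\<forall>zs z. (\<forall>n. zs n \<in> interior (edom \<Phi>)) \<and> zs \<longlonglongrightarrow> z \<and> z \<in> frontier (edom \<Phi>)
        \<longrightarrow> filterlim (\<lambda>n. norm (egrad \<Phi> (zs n))) at_top sequentially)"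

definition essentially_strictly_convex :: "('a::euclidean_space \<Rightarrow> ereal) \<Rightarrow> bool" where
  "essentially_strictly_convex \<Phi> \<longleftrightarrow>
     (\<forall>S. convex S \<and> S \<subseteq> {x. subdiff \<Phi> x \<noteq> {}} \<longrightarrow>
        (\<forall>x\<in>S. \<forall>y\<in>S. \<forall>t. x \<noteq> y \<and> 0 < t \<and> t < 1 \<longrightarrow>
           \<Phi> ((1 - t) *\<^sub>R x + t *\<^sub>R y) < ereal (1 - t) * \<Phi> x + ereal t * \<Phi> y))"

definition legendre :: "('a::euclidean_space \<Rightarrow> ereal) \<Rightarrow> bool" where
  "legendre \<Phi> \<longleftrightarrow> essentially_smooth \<Phi> \<and> essentially_strictly_convex \<Phi>"

definition bregman :: "('a::euclidean_space \<Rightarrow> ereal) \<Rightarrow> 'a \<Rightarrow> 'a \<Rightarrow> ereal" where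
  "bregman \<Phi> z1 z2 = (if z1 \<in> edom \<Phi> \<and> z2 \<in> interior (edom \<Phi>)
      then \<Phi> z1 - \<Phi> z2 - ereal (egrad \<Phi> z2 \<bullet> (z1 - z2)) else \<infinity>)"

definition bregman_proj :: "('a::euclidean_space \<Rightarrow> ereal) \<Rightarrow> 'a \<Rightarrow> 'a set \<Rightarrow> 'a" where
  "bregman_proj \<Phi> y C = (THE z. z \<in> C \<and> (\<forall>w\<in>C. bregman \<Phi> z y \<le> bregman \<Phi> w y))"

definition coercive :: "('a::real_normed_vector \<Rightarrow> ereal) \<Rightarrow> bool" where
  "coercive h \<longleftrightarrow> (h \<longlongrightarrow> \<infinity>) at_infinity"

end

theory Submission
  imports Defs
begin


lemma lin_inner:
  fixes D :: "'a::euclidean_space \<Rightarrow> real"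
  assumes "linear D"
  shows "\<exists>g. D = (\<lambda>h. g \<bullet> h)"
proof -
  have "D h = (\<Sum>b\<in>Basis. D b *\<^sub>R b) \<bullet> h" for h
  proof -
    have "D h = D (\<Sum>b\<in>Basis. (h \<bullet> b) *\<^sub>R b)" by (simp add: euclidean_representation)
    also have "\<dots> = (\<Sum>b\<in>Basis. (h \<bullet> b) * D b)" using assms
      by (simp add: linear_sum linear_scale)
    also have "\<dots> = (\<Sum>b\<in>Basis. D b * (b \<bullet> h))"
      by (rule sum.cong) (auto simp: inner_commute)
    also have "\<dots> = (\<Sum>b\<in>Basis. D b *\<^sub>R b) \<bullet> h"
      by (simp add: inner_sum_left)
    finally show ?thesis .
  qed
  then show ?thesis by blast
qed



locale leg =
  fixes \<Phi> :: "'a::euclidean_space \<Rightarrow> ereal"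
  assumes G: "Gamma0 \<Phi>" and L: "legendre \<Phi>"
begin

abbreviation "U \<equiv> interior (edom \<Phi>)"
abbreviation "f \<equiv> (\<lambda>x. real_of_ereal (\<Phi> x))"
abbreviation "g \<equiv> egrad \<Phi>"
abbreviation "Dr z y \<equiv> f z - f y - g y \<bullet> (z - y)"

lemma notminf: "\<Phi> x \<noteq> -\<infinity>"
  using G unfolding Gamma0_def proper_fun_def by auto

lemma dom_eq: "x \<in> edom \<Phi> \<Longrightarrow> \<Phi> x = ereal (f x)"
  using notminf[of x] unfolding edom_def by (cases "\<Phi> x") auto

lemma dom_obt: "x \<in> edom \<Phi> \<Longrightarrow> \<exists>a. \<Phi> x = ereal a"
  using notminf[of x] unfolding edom_def by (cases "\<Phi> x") auto

lemma le_real: "\<Phi> x \<le> ereal r \<Longrightarrow> f x \<le> r"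
  using notminf[of x] by (cases "\<Phi> x") auto

lemma less_real: "\<Phi> x < ereal r \<Longrightarrow> f x < r"
  using notminf[of x] by (cases "\<Phi> x") auto

lemma notdom: "x \<notin> edom \<Phi> \<Longrightarrow> \<Phi> x = \<infinity>"
  unfolding edom_def by auto

lemma cvx_real:
  assumes "x \<in> edom \<Phi>" "y \<in> edom \<Phi>" "0 \<le> t" "t \<le> 1"
  shows "(1 - t) *\<^sub>R x + t *\<^sub>R y \<in> edom \<Phi> \<and>
         f ((1 - t) *\<^sub>R x + t *\<^sub>R y) \<le> (1 - t) * f x + t * f y"
proof -
  have "\<Phi> ((1 - t) *\<^sub>R x + t *\<^sub>R y) \<le> ereal (1 - t) * \<Phi> x + ereal t * \<Phi> y"
    using G assms unfolding Gamma0_def convex_fun_def by blast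
  also have "\<dots> = ereal ((1 - t) * f x + t * f y)"
    using dom_obt[OF assms(1)] dom_obt[OF assms(2)] by auto
  finally have *: "\<Phi> ((1 - t) *\<^sub>R x + t *\<^sub>R y) \<le> ereal ((1 - t) * f x + t * f y)" .
  then have "(1 - t) *\<^sub>R x + t *\<^sub>R y \<in> edom \<Phi>" unfolding edom_def
    using le_less_trans by fastforce
  with * le_real show ?thesis by blast
qed

lemma convex_dom: "convex (edom \<Phi>)"
  unfolding convex_alt using cvx_real by blast

lemma U_open: "open U" by simp
lemma U_convex: "convex U" using convex_dom by simp
lemma U_dom: "z \<in> U \<Longrightarrow> z \<in> edom \<Phi>" using interior_subset by blast

lemma grad: assumes "z \<in> U" shows "(f has_derivative (\<lambda>h. g z \<bullet> h)) (at z)"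
proof -
  have "f differentiable (at z)" using L assms unfolding legendre_def essentially_smooth_def by blast
  then obtain D where D: "(f has_derivative D) (at z)" unfolding differentiable_def by blast
  then have "linear D" using has_derivative_linear by blast
  then obtain v where "D = (\<lambda>h. v \<bullet> h)" using lin_inner by blast
  with D have ex: "\<exists>v. (f has_derivative (\<lambda>h. v \<bullet> h)) (at z)" by blast
  show ?thesis unfolding egrad_def by (rule someI_ex[OF ex])
qed

lemma dir_lower:
  fixes F :: "'a \<Rightarrow> real"
  assumes D: "(F has_derivative (\<lambda>h. v \<bullet> h)) (at z)" and T: "T > 0"
    and H: "\<And>t. 0 < t \<Longrightarrow> t \<le> T \<Longrightarrow> F (z + t *\<^sub>R d) - F z \<ge> t * c"
  shows "v \<bullet> d \<ge> c"
proof (rule ccontr)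
  assume "\<not> ?thesis"
  then have a: "c - v \<bullet> d > 0" by simp
  show False
  proof (cases "d = 0")
    case True
    then show ?thesis using H[OF T order.refl] T a by (simp add: mult_le_0_iff)
  next
    case False
    then have nd: "norm d > 0" by simp
    define e where "e = (c - v \<bullet> d) / (2 * norm d)"
    have e: "e > 0" using a nd by (simp add: e_def)
    obtain \<delta> where \<delta>: "\<delta> > 0" "\<And>y. norm (y - z) < \<delta> \<Longrightarrow>
        norm (F y - F z - v \<bullet> (y - z)) \<le> e * norm (y - z)"
      using D e unfolding has_derivative_at_alt by blast
    define t where "t = min T (\<delta> / (2 * norm d))"
    have t: "t > 0" "t \<le> T" using T \<delta> nd by (auto simp: t_def)
    have "norm (t *\<^sub>R d) = t * norm d" using t by simp
    also have "\<dots> \<le> \<delta> / (2 * norm d) * norm d" using nd by (intro mult_right_mono) (auto simp: t_def)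
    also have "\<dots> < \<delta>" using nd \<delta> by (simp add: field_simps)
    finally have "norm ((z + t *\<^sub>R d) - z) < \<delta>" by simp
    from \<delta>(2)[OF this] have "norm (F (z + t *\<^sub>R d) - F z - t * (v \<bullet> d)) \<le> e * (t * norm d)"
      using t by simp
    then have "F (z + t *\<^sub>R d) - F z \<le> t * (v \<bullet> d) + e * (t * norm d)" by simp
    also have "e * (t * norm d) = t * ((c - v \<bullet> d) / 2)" using nd by (simp add: e_def field_simps)
    finally have "F (z + t *\<^sub>R d) - F z \<le> t * (v \<bullet> d + (c - v \<bullet> d) / 2)" by (simp add: algebra_simps)
    also have "\<dots> < t * c"
    proof (rule mult_strict_left_mono)
      show "v \<bullet> d + (c - v \<bullet> d) / 2 < c" using a by (simp add: field_simps)
    qed (use t in auto)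
    finally show False using H[OF t] by simp
  qed
qed

lemma dir_upper:
  fixes F :: "'a \<Rightarrow> real"
  assumes D: "(F has_derivative (\<lambda>h. v \<bullet> h)) (at z)" and T: "T > 0"
    and H: "\<And>t. 0 < t \<Longrightarrow> t \<le> T \<Longrightarrow> F (z + t *\<^sub>R d) - F z \<le> t * c"
  shows "v \<bullet> d \<le> c"
proof -
  have D': "((\<lambda>x. - F x) has_derivative (\<lambda>h. (-v) \<bullet> h)) (at z)"
    using has_derivative_minus[OF D] by simp
  have "(-v) \<bullet> d \<ge> -c"
    by (rule dir_lower[OF D' T]) (use H in fastforce)
  then show ?thesis by simp
qed

lemma subgrad:
  assumes z: "z \<in> U" and w: "w \<in> edom \<Phi>"
  shows "f w \<ge> f z + g z \<bullet> (w - z)"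
proof -
  have "g z \<bullet> (w - z) \<le> f w - f z"
  proof (rule dir_upper[OF grad[OF z], of 1])
    fix t :: real assume t: "0 < t" "t \<le> 1"
    have "z + t *\<^sub>R (w - z) = (1 - t) *\<^sub>R z + t *\<^sub>R w" by (simp add: algebra_simps)
    moreover have "f ((1 - t) *\<^sub>R z + t *\<^sub>R w) \<le> (1 - t) * f z + t * f w"
      using cvx_real[OF U_dom[OF z] w, of t] t by auto
    ultimately show "f (z + t *\<^sub>R (w - z)) - f z \<le> t * (f w - f z)" by (simp add: algebra_simps)
  qed simp
  then show ?thesis by simp
qed

lemma subgrad_in: assumes "z \<in> U" shows "g z \<in> subdiff \<Phi> z"
proof -
  have "\<Phi> y \<ge> \<Phi> z + ereal (g z \<bullet> (y - z))" for y
  proof (cases "y \<in> edom \<Phi>")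
    case True
    then show ?thesis using subgrad[OF assms True] dom_obt[OF True] dom_obt[OF U_dom[OF assms]] by auto
  next
    case False
    then show ?thesis using notdom by simp
  qed
  then show ?thesis using U_dom[OF assms] unfolding subdiff_def by simp
qed

lemma strict:
  assumes "x \<in> U" "y \<in> U" "x \<noteq> y" "0 < t" "t < 1"
  shows "f ((1 - t) *\<^sub>R x + t *\<^sub>R y) < (1 - t) * f x + t * f y"
proof -
  have S: "convex U \<and> U \<subseteq> {x. subdiff \<Phi> x \<noteq> {}}" using U_convex subgrad_in by blast
  have "\<Phi> ((1 - t) *\<^sub>R x + t *\<^sub>R y) < ereal (1 - t) * \<Phi> x + ereal t * \<Phi> y"
    using L S assms unfolding legendre_def essentially_strictly_convex_def by blast
  also have "\<dots> = ereal ((1 - t) * f x + t * f y)"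
    using dom_obt[OF U_dom[OF assms(1)]] dom_obt[OF U_dom[OF assms(2)]] by auto
  finally show ?thesis by (rule less_real)
qed

lemma f_cont: "continuous_on U f"
proof (rule continuous_at_imp_continuous_on, rule ballI)
  fix z assume "z \<in> U"
  from grad[OF this] show "isCont f z" by (rule has_derivative_continuous)
qed

end


context leg begin

lemma g_cont: "continuous_on U g"
  unfolding continuous_on_iff
proof (intro ballI allI impI)
  fix y0 :: 'a and \<epsilon> :: real
  assume y0: "y0 \<in> U" and \<epsilon>: "\<epsilon> > 0"
  obtain r where r: "r > 0" "ball y0 r \<subseteq> U" using y0 U_open openE by blast
  define e where "e = \<epsilon> / 4"
  have e: "e > 0" using \<epsilon> by (simp add: e_def)
  obtain \<delta>0 where \<delta>0: "\<delta>0 > 0" "\<And>y. norm (y - y0) < \<delta>0 \<Longrightarrow>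
        norm (f y - f y0 - g y0 \<bullet> (y - y0)) \<le> e * norm (y - y0)"
    using grad[OF y0] e unfolding has_derivative_at_alt by blast
  define \<delta> where "\<delta> = min \<delta>0 r"
  have \<delta>: "\<delta> > 0" using \<delta>0 r by (simp add: \<delta>_def)
  show "\<exists>d>0. \<forall>y\<in>U. dist y y0 < d \<longrightarrow> dist (g y) (g y0) < \<epsilon>"
  proof (intro exI[of _ "\<delta> / 2"] conjI ballI impI)
    show "\<delta> / 2 > 0" using \<delta> by simp
    fix y assume y: "y \<in> U" and dy: "dist y y0 < \<delta> / 2"
    define G where "G = g y - g y0"
    show "dist (g y) (g y0) < \<epsilon>"
    proof (cases "G = 0")
      case True
      then show ?thesis using \<epsilon> by (simp add: G_def)
    next
      case False
      define s where "s = \<delta> / 2"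
      have s: "s > 0" using \<delta> by (simp add: s_def)
      define u where "u = (s / norm G) *\<^sub>R G + (y - y0)"
      have nG: "norm G > 0" using False by simp
      have nu: "norm u \<le> s + norm (y - y0)" unfolding u_def
        using norm_triangle_ineq[of "(s / norm G) *\<^sub>R G" "y - y0"] nG s by simp
      have nyy: "norm (y - y0) < s" using dy by (simp add: dist_norm s_def)
      have nu2: "norm u < 2 * s" using nu nyy by simp
      have "norm u < \<delta>" using nu2 by (simp add: s_def)
      then have u\<delta>0: "norm ((y0 + u) - y0) < \<delta>0" and "y0 + u \<in> ball y0 r"
        by (auto simp: \<delta>_def dist_norm)
      then have yu: "y0 + u \<in> edom \<Phi>" using r U_dom by blast
      have i: "f (y0 + u) \<ge> f y + g y \<bullet> (y0 + u - y)" using subgrad[OF y yu] .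
      have ii: "f y \<ge> f y0 + g y0 \<bullet> (y - y0)" using subgrad[OF y0 U_dom[OF y]] .
      have iii: "f (y0 + u) - f y0 - g y0 \<bullet> u \<le> e * norm u"
        using \<delta>0(2)[OF u\<delta>0] by simp
      have eq1: "y0 + u - y = (s / norm G) *\<^sub>R G" by (simp add: u_def algebra_simps)
      have key: "g y \<bullet> (y0 + u - y) - g y0 \<bullet> u + g y0 \<bullet> (y - y0) \<le> e * norm u"
        using i ii iii by linarith
      have "g y \<bullet> (y0 + u - y) - g y0 \<bullet> u + g y0 \<bullet> (y - y0) = G \<bullet> (y0 + u - y)"
        by (simp add: G_def inner_diff_left inner_diff_right inner_add_right algebra_simps)
      with key eq1 have "G \<bullet> ((s / norm G) *\<^sub>R G) \<le> e * norm u" by simp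
      moreover have "G \<bullet> ((s / norm G) *\<^sub>R G) = s * norm G"
        using nG by (simp add: inner_scaleR_right power2_eq_square flip: power2_norm_eq_inner)
      ultimately have "s * norm G \<le> e * norm u" by simp
      also have "\<dots> < e * (2 * s)" using nu2 e by simp
      finally have "norm G < 2 * e" using s by (simp add: algebra_simps)
      then have "norm G < \<epsilon>" using \<epsilon> by (simp add: e_def)
      then show ?thesis by (simp add: dist_norm G_def)
    qed
  qed
qed

lemma bregman_eq:
  assumes "y \<in> U"
  shows "bregman \<Phi> z y = (if z \<in> edom \<Phi> then ereal (Dr z y) else \<infinity>)"
proof (cases "z \<in> edom \<Phi>")
  case True
  obtain a where a: "\<Phi> z = ereal a" using dom_obt[OF True] by blast
  obtain b where b: "\<Phi> y = ereal b" using dom_obt[OF U_dom[OF assms]] by blast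
  show ?thesis using True assms a b unfolding bregman_def by simp
next
  case False
  then show ?thesis using assms unfolding bregman_def by simp
qed

lemma Dr_nonneg: "y \<in> U \<Longrightarrow> z \<in> edom \<Phi> \<Longrightarrow> Dr z y \<ge> 0"
  using subgrad[of y z] by simp

lemma open_seg_U:
  assumes "y \<in> U" "z \<in> edom \<Phi>"
  shows "open_segment y z \<subseteq> U"
  using in_interior_closure_convex_segment[OF convex_dom assms(1)] assms(2) closure_subset by blast

lemma Dr_pos:
  assumes y: "y \<in> U" and z: "z \<in> edom \<Phi>" and ne: "z \<noteq> y"
  shows "Dr z y > 0"
proof (rule ccontr)
  assume "\<not> ?thesis"
  then have D0: "Dr z y \<le> 0" by simp
  define m where "m = (1 - 1/2) *\<^sub>R y + (1/2::real) *\<^sub>R z"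
  have "m \<in> open_segment y z"
    using ne by (simp add: in_segment m_def) (rule exI[of _ "1/2"], simp)
  then have mU: "m \<in> U" using open_seg_U[OF y z] by blast
  have fm: "f m \<le> (1 - 1/2) * f y + (1/2) * f z"
    using cvx_real[OF U_dom[OF y] z, of "1/2"] by (simp add: m_def)
  have half: "(1/2::real) *\<^sub>R y + (1/2::real) *\<^sub>R y = y" for y :: 'a
    by (metis scaleR_add_left field_sum_of_halves scaleR_one)
  have mmy: "m - y = (1/2::real) *\<^sub>R (z - y)"
    by (simp add: m_def algebra_simps) (metis half add.commute diff_add_cancel)
  have gm: "g y \<bullet> (m - y) = (1/2) * (g y \<bullet> (z - y))" by (simp add: mmy)
  have fm': "f m \<le> (1/2) * f y + (1/2) * f z" using fm by simp
  have Dm: "f m \<le> f y + g y \<bullet> (m - y)" using fm' gm D0 by linarith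
  have mney: "m \<noteq> y"
  proof
    assume "m = y"
    then have "(1/2::real) *\<^sub>R (z - y) = 0" using mmy by simp
    then show False using ne by simp
  qed
  define q where "q = (1 - 1/2) *\<^sub>R y + (1/2::real) *\<^sub>R m"
  have sq: "f q < (1 - 1/2) * f y + (1/2) * f m"
    using strict[OF y mU mney[symmetric], of "1/2"] by (simp add: q_def)
  then have sq': "f q < (1/2) * f y + (1/2) * f m" by simp
  have qy: "q - y = (1/2::real) *\<^sub>R (m - y)"
    by (simp add: q_def algebra_simps) (metis half add.commute diff_add_cancel)
  have "q \<in> closed_segment y m" unfolding in_segment q_def
    by (rule exI[of _ "1/2"]) simp
  then have "q \<in> U" using U_convex mU y by (meson convex_contains_segment subsetD)
  then have "f q \<ge> f y + g y \<bullet> (q - y)" using subgrad[OF y U_dom] by blast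
  moreover have "g y \<bullet> (q - y) = (1/2) * (g y \<bullet> (m - y))" by (simp add: qy)
  ultimately show False using sq' Dm by linarith
qed

lemma lsc_eps:
  assumes "ereal b < \<Phi> z"
  shows "\<exists>e>0. \<forall>w. dist w z < e \<longrightarrow> ereal b < \<Phi> w"
proof -
  have "\<Phi> z \<le> Liminf (at z) \<Phi>" using G unfolding Gamma0_def lsc_fun_def by blast
  then have "eventually (\<lambda>w. ereal b < \<Phi> w) (at z)" using assms le_Liminf_iff by blast
  then obtain d where "d > 0" "\<forall>w. w \<noteq> z \<and> dist w z < d \<longrightarrow> ereal b < \<Phi> w"
    unfolding eventually_at by auto
  then show ?thesis using assms by (metis)
qed

end



lemma lsc_min:
  fixes F :: "'a::metric_space \<Rightarrow> 'b::linorder"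
  assumes K: "compact K" "K \<noteq> {}"
    and lsc: "\<And>x a. x \<in> K \<Longrightarrow> a < F x \<Longrightarrow> \<exists>e>0. \<forall>w\<in>K. dist w x < e \<longrightarrow> a < F w"
  shows "\<exists>x\<in>K. \<forall>w\<in>K. F x \<le> F w"
proof (rule ccontr)
  assume "\<not> ?thesis"
  then have "\<forall>x\<in>K. \<exists>w\<in>K. F w < F x" by (auto simp: not_le)
  then obtain W where W: "\<And>x. x \<in> K \<Longrightarrow> W x \<in> K \<and> F (W x) < F x" by metis
  have "\<forall>x\<in>K. \<exists>e>0. \<forall>w\<in>K. dist w x < e \<longrightarrow> F (W x) < F w"
    using lsc W by blast
  then obtain E where E: "\<And>x. x \<in> K \<Longrightarrow> E x > 0 \<and> (\<forall>w\<in>K. dist w x < E x \<longrightarrow> F (W x) < F w)"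
    by metis
  have cov: "K \<subseteq> (\<Union>x\<in>K. ball x (E x))" using E by force
  obtain T where T: "T \<subseteq> K" "finite T" "K \<subseteq> (\<Union>x\<in>T. ball x (E x))"
    using compactE_image[OF K(1) _ cov] by blast
  have "T \<noteq> {}" using T(3) K(2) by blast
  define m where "m = Min ((\<lambda>x. F (W x)) ` T)"
  have "m \<in> (\<lambda>x. F (W x)) ` T" unfolding m_def using T(2) \<open>T \<noteq> {}\<close> by (intro Min_in) auto
  then obtain x0 where x0: "x0 \<in> T" "F (W x0) = m" by blast
  have "W x0 \<in> K" using W x0(1) T(1) by blast
  then obtain x1 where x1: "x1 \<in> T" "W x0 \<in> ball x1 (E x1)" using T(3) by blast
  have "F (W x1) < F (W x0)" using E[of x1] x1 T(1) \<open>W x0 \<in> K\<close> by (auto simp: dist_commute)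
  moreover have "m \<le> F (W x1)" unfolding m_def using T(2) x1(1) by (intro Min_le) auto
  ultimately show False using x0 by simp
qed

context leg begin

lemma gt_real: "x \<in> edom \<Phi> \<Longrightarrow> ereal r < \<Phi> x \<Longrightarrow> r < f x"
  using dom_obt[of x] by auto

lemma breg_lsc:
  assumes y: "y \<in> U" and a: "a < bregman \<Phi> z y"
  shows "\<exists>e>0. \<forall>w. dist w z < e \<longrightarrow> a < bregman \<Phi> w y"
proof -
  define A where "A w = f y + g y \<bullet> (w - y)" for w
  have DA: "Dr w y = f w - A w" for w by (simp add: A_def)
  obtain r where r: "a < ereal r" "ereal r < bregman \<Phi> z y" using ereal_dense2[OF a] by blast
  obtain \<eta> where \<eta>: "\<eta> > 0" "ereal (r + A z + \<eta>) < \<Phi> z"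
  proof (cases "z \<in> edom \<Phi>")
    case True
    obtain c where c: "\<Phi> z = ereal c" using dom_obt[OF True] by blast
    then have fz: "f z = c" by simp
    have "r < f z - A z" using r(2) bregman_eq[OF y] DA True by simp
    then have "r + A z + (c - A z - r) / 2 < c" "(c - A z - r) / 2 > 0" using fz by (simp_all add: field_simps)
    then show ?thesis using that[of "(c - A z - r) / 2"] c by simp
  next
    case False
    then show ?thesis using that[of 1] notdom by simp
  qed
  obtain e1 where e1: "e1 > 0" "\<And>w. dist w z < e1 \<Longrightarrow> ereal (r + A z + \<eta>) < \<Phi> w"
    using lsc_eps[OF \<eta>(2)] by blast
  define e where "e = min e1 (\<eta> / (norm (g y) + 1))"
  have gp: "norm (g y) + 1 > 0" using norm_ge_zero[of "g y"] by linarith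
  then have e: "e > 0" using e1 \<eta> by (simp add: e_def)
  show ?thesis
  proof (intro exI[of _ e] conjI allI impI)
    show "e > 0" by (rule e)
    fix w assume dw: "dist w z < e"
    show "a < bregman \<Phi> w y"
    proof (cases "w \<in> edom \<Phi>")
      case False
      then show ?thesis using r(1) bregman_eq[OF y] by auto
    next
      case True
      have "ereal (r + A z + \<eta>) < \<Phi> w" using e1(2) dw by (simp add: e_def)
      then have fw: "r + A z + \<eta> < f w" using gt_real[OF True] by blast
      have "\<bar>A w - A z\<bar> = \<bar>g y \<bullet> (w - z)\<bar>" by (simp add: A_def inner_diff_right)
      also have "\<dots> \<le> norm (g y) * norm (w - z)" by (rule Cauchy_Schwarz_ineq2)
      also have "\<dots> \<le> (norm (g y) + 1) * norm (w - z)" by (simp add: mult_right_mono)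
      also have "\<dots> < (norm (g y) + 1) * (\<eta> / (norm (g y) + 1))"
        using dw by (intro mult_strict_left_mono) (use gp in \<open>auto simp: e_def dist_norm\<close>)
      also have "\<dots> = \<eta>" using gp by simp
      finally have "A w < A z + \<eta>" by simp
      with fw have "r < Dr w y" unfolding DA by linarith
      then show ?thesis using r(1) True bregman_eq[OF y] by (simp add: less_le_trans)
    qed
  qed
qed

lemma sphere_lemma:
  assumes y: "y \<in> U" and \<rho>: "\<rho> > 0"
  shows "\<exists>\<delta>>0. \<forall>z\<in>edom \<Phi>. norm (z - y) \<ge> \<rho> \<longrightarrow> Dr z y \<ge> \<delta> * norm (z - y) / \<rho>"
proof -
  have "\<exists>u0\<in>sphere y \<rho>. \<forall>w\<in>sphere y \<rho>. bregman \<Phi> u0 y \<le> bregman \<Phi> w y"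
  proof (rule lsc_min)
    show "compact (sphere y \<rho>)" by simp
    show "sphere y \<rho> \<noteq> {}" using \<rho> by simp
    fix x a assume "a < bregman \<Phi> x y"
    then show "\<exists>e>0. \<forall>w\<in>sphere y \<rho>. dist w x < e \<longrightarrow> a < bregman \<Phi> w y"
      using breg_lsc[OF y] by blast
  qed
  then obtain u0 where u0: "u0 \<in> sphere y \<rho>" "\<And>w. w \<in> sphere y \<rho> \<Longrightarrow> bregman \<Phi> u0 y \<le> bregman \<Phi> w y"
    by blast
  define \<delta> where "\<delta> = (if u0 \<in> edom \<Phi> then Dr u0 y else 1)"
  have "u0 \<noteq> y" using u0(1) \<rho> by auto
  then have \<delta>: "\<delta> > 0" using Dr_pos[OF y] by (simp add: \<delta>_def)
  show ?thesis
  proof (intro exI[of _ \<delta>] conjI ballI impI)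
    show "\<delta> > 0" by (rule \<delta>)
    fix z assume z: "z \<in> edom \<Phi>" and R: "norm (z - y) \<ge> \<rho>"
    define R where "R = norm (z - y)"
    have Rpos: "R > 0" unfolding R_def using R \<rho> by linarith
    define t where "t = \<rho> / R"
    have t: "0 < t" "t \<le> 1" using \<rho> Rpos R by (auto simp: t_def R_def)
    define u where "u = (1 - t) *\<^sub>R y + t *\<^sub>R z"
    have cv: "u \<in> edom \<Phi> \<and> f u \<le> (1 - t) * f y + t * f z"
      using cvx_real[OF U_dom[OF y] z, of t] t by (simp add: u_def)
    have uy: "u - y = t *\<^sub>R (z - y)" by (simp add: u_def algebra_simps)
    have "dist y u = \<rho>" using t Rpos \<rho> by (simp add: dist_norm norm_minus_commute[of y] uy t_def R_def)
    then have us: "u \<in> sphere y \<rho>" by simp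
    have "bregman \<Phi> u0 y \<le> ereal (Dr u y)" using u0(2)[OF us] bregman_eq[OF y] cv by simp
    then have u0d: "u0 \<in> edom \<Phi>" using bregman_eq[OF y] by (cases "u0 \<in> edom \<Phi>") auto
    then have "\<delta> \<le> Dr u y" using \<open>bregman \<Phi> u0 y \<le> _\<close> bregman_eq[OF y] by (simp add: \<delta>_def)
    also have "Dr u y \<le> t * Dr z y"
    proof -
      have "g y \<bullet> (u - y) = t * (g y \<bullet> (z - y))" by (simp add: uy)
      then show ?thesis using cv by (simp add: algebra_simps)
    qed
    finally have "\<delta> \<le> \<rho> / R * Dr z y" by (simp add: t_def)
    then have "\<delta> * R \<le> \<rho> * Dr z y" using Rpos by (simp add: field_simps)
    then show "Dr z y \<ge> \<delta> * norm (z - y) / \<rho>" using \<rho> by (simp add: R_def field_simps)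
  qed
qed

end


context leg begin

lemma exists_min:
  assumes y: "y \<in> U" and C: "closed C" and c: "c \<in> C" "c \<in> U"
  shows "\<exists>z\<in>C. \<forall>w\<in>C. bregman \<Phi> z y \<le> bregman \<Phi> w y"
proof -
  obtain \<delta> where \<delta>: "\<delta> > 0" "\<And>z. z \<in> edom \<Phi> \<Longrightarrow> norm (z - y) \<ge> 1 \<Longrightarrow> Dr z y \<ge> \<delta> * norm (z - y)"
    using sphere_lemma[OF y, of 1] by auto
  define R0 where "R0 = max 1 (Dr c y / \<delta>)"
  define K where "K = C \<inter> cball y R0"
  have Kc: "compact K" unfolding K_def using C by (simp add: closed_Int_compact)
  have cK: "c \<in> K"
  proof (cases "norm (c - y) \<ge> 1")
    case True
    then have "\<delta> * norm (c - y) \<le> Dr c y" using \<delta>(2) U_dom[OF c(2)] by blast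
    then have "norm (c - y) \<le> Dr c y / \<delta>" using \<delta>(1) by (simp add: field_simps)
    then show ?thesis using c by (auto simp: K_def R0_def dist_norm norm_minus_commute)
  next
    case False
    then show ?thesis using c by (auto simp: K_def R0_def dist_norm norm_minus_commute)
  qed
  have "\<exists>z\<in>K. \<forall>w\<in>K. bregman \<Phi> z y \<le> bregman \<Phi> w y"
  proof (rule lsc_min[OF Kc])
    show "K \<noteq> {}" using cK by blast
    fix x a assume "a < bregman \<Phi> x y"
    then show "\<exists>e>0. \<forall>w\<in>K. dist w x < e \<longrightarrow> a < bregman \<Phi> w y"
      using breg_lsc[OF y] by blast
  qed
  then obtain z where z: "z \<in> K" "\<And>w. w \<in> K \<Longrightarrow> bregman \<Phi> z y \<le> bregman \<Phi> w y" by blast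
  show ?thesis
  proof (intro bexI ballI)
    show "z \<in> C" using z(1) by (simp add: K_def)
    fix w assume w: "w \<in> C"
    show "bregman \<Phi> z y \<le> bregman \<Phi> w y"
    proof (cases "w \<in> K")
      case True
      then show ?thesis using z(2) by blast
    next
      case False
      then have far: "norm (w - y) > R0" using w by (auto simp: K_def dist_norm norm_minus_commute)
      show ?thesis
      proof (cases "w \<in> edom \<Phi>")
        case False
        then show ?thesis using bregman_eq[OF y] by simp
      next
        case True
        have "R0 \<ge> 1" by (simp add: R0_def)
        then have "Dr w y \<ge> \<delta> * norm (w - y)" using far \<delta>(2)[OF True] by simp
        moreover have "\<delta> * norm (w - y) > \<delta> * R0" using far \<delta>(1) by simp
        moreover have "\<delta> * R0 \<ge> Dr c y"
          using \<delta>(1) by (simp add: R0_def field_simps max_def)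
        ultimately have "Dr c y \<le> Dr w y" by linarith
        then have "bregman \<Phi> c y \<le> bregman \<Phi> w y" using bregman_eq[OF y] True U_dom[OF c(2)] by simp
        then show ?thesis using z(2)[OF cK] by simp
      qed
    qed
  qed
qed

lemma interior_min:
  assumes y: "y \<in> U" and C: "convex C" and c: "c \<in> C" "c \<in> U"
    and zb: "zb \<in> C" "zb \<in> edom \<Phi>" and mn: "\<And>w. w \<in> C \<Longrightarrow> w \<in> U \<Longrightarrow> Dr zb y \<le> Dr w y"
  shows "zb \<in> U"
proof (rule ccontr)
  assume nU: "zb \<notin> U"
  obtain r0 where r0: "r0 > 0" "ball c r0 \<subseteq> U" using c(2) U_open openE by blast
  define r where "r = r0 / 2"
  have r: "r > 0" "cball c r \<subseteq> U" using r0 by (auto simp: r_def)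
  have "compact (f ` cball c r)"
    by (rule compact_continuous_image) (use continuous_on_subset[OF f_cont r(2)] in auto)
  then obtain M where M: "\<And>w. w \<in> cball c r \<Longrightarrow> f w \<le> M"
    using compact_imp_bounded bounded_iff by (metis abs_le_D1 image_eqI real_norm_def)
  define d where "d = c - zb"
  define L where "L = g y \<bullet> d"
  define B where "B = max 0 ((M - f zb - L) / r)"
  have cz: "c \<noteq> zb" using c nU by blast
  have bound: "norm (g (zb + t *\<^sub>R d)) \<le> B" if t: "0 < t" "t < 1" for t
  proof -
    define zt where "zt = zb + t *\<^sub>R d"
    have "zt \<in> open_segment c zb" unfolding in_segment using cz t
      by (intro conjI exI[of _ "1 - t"]) (auto simp: zt_def d_def algebra_simps)
    then have ztU: "zt \<in> U" using open_seg_U[OF c(2) zb(2)] by blast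
    have "zt = (1 - t) *\<^sub>R zb + t *\<^sub>R c" by (simp add: zt_def d_def algebra_simps)
    then have ztC: "zt \<in> C" using C zb(1) c(1) t unfolding convex_alt by simp
    define u where "u = g zt"
    show ?thesis
    proof (cases "u = 0")
      case True
      then show ?thesis by (simp add: u_def zt_def B_def)
    next
      case False
      then have nu: "norm u > 0" by simp
      define v where "v = (r / norm u) *\<^sub>R u"
      have nv: "norm v = r" using nu r by (simp add: v_def)
      have uv: "u \<bullet> v = r * norm u"
        using nu by (simp add: v_def inner_scaleR_right power2_eq_square flip: power2_norm_eq_inner)
      define w where "w = c + v"
      have wc: "w \<in> cball c r" using nv by (simp add: w_def dist_norm)
      have wd: "w \<in> edom \<Phi>" using wc r(2) U_dom by blast
      have i: "f w \<ge> f zt + u \<bullet> (w - zt)" using subgrad[OF ztU wd] by (simp add: u_def)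
      have ii: "f zb \<ge> f zt + u \<bullet> (zb - zt)" using subgrad[OF ztU zb(2)] by (simp add: u_def)
      have iii: "Dr zb y \<le> Dr zt y" using mn[OF ztC ztU] .
      have iv: "f w \<le> M" using M[OF wc] .
      have e1: "w - zt = (1 - t) *\<^sub>R d + v" by (simp add: w_def zt_def d_def algebra_simps)
      have e2: "zb - zt = - (t *\<^sub>R d)" by (simp add: zt_def)
      have e3: "zt - y = (zb - y) + t *\<^sub>R d" by (simp add: zt_def)
      have ii': "t * (u \<bullet> d) \<ge> f zt - f zb" using ii e2 by simp
      have iii': "f zt \<ge> f zb + t * L" using iii e3 by (simp add: L_def inner_add_right algebra_simps)
      have "t * (u \<bullet> d) \<ge> t * L" using ii' iii' by linarith
      then have udL: "u \<bullet> d \<ge> L" using t by simp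
      have "(1 - t) * (u \<bullet> d) \<ge> (1 - t) * L" using udL t by (intro mult_left_mono) auto
      moreover have "f w \<ge> f zt + (1 - t) * (u \<bullet> d) + u \<bullet> v" using i e1 by (simp add: inner_add_right)
      ultimately have "u \<bullet> v \<le> M - f zb - L" using iv iii' by (simp add: algebra_simps)
      then have "r * norm u \<le> M - f zb - L" using uv by simp
      then have "norm u \<le> (M - f zb - L) / r" using r(1) by (simp add: field_simps)
      then show ?thesis by (simp add: u_def zt_def B_def)
    qed
  qed
  define ts where "ts n = inverse (real (Suc n)) / 2" for n
  have ts: "0 < ts n" "ts n < 1" for n
    by (auto simp: ts_def field_simps)
  define zs where "zs n = zb + ts n *\<^sub>R d" for n
  have zsU: "zs n \<in> U" for n
  proof -
    have "zs n \<in> open_segment c zb" unfolding in_segment using cz ts[of n]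
      by (intro conjI exI[of _ "1 - ts n"]) (auto simp: zs_def d_def algebra_simps)
    then show ?thesis using open_seg_U[OF c(2) zb(2)] by blast
  qed
  have "ts \<longlonglongrightarrow> 0" unfolding ts_def
    using tendsto_divide_zero[OF LIMSEQ_inverse_real_of_nat, of 2] by simp
  then have "zs \<longlonglongrightarrow> zb + 0 *\<^sub>R d" unfolding zs_def
    by (intro tendsto_intros)
  then have zsl: "zs \<longlonglongrightarrow> zb" by simp
  have fr: "zb \<in> frontier (edom \<Phi>)" using zb(2) nU closure_subset unfolding frontier_def by blast
  have "filterlim (\<lambda>n. norm (g (zs n))) at_top sequentially"
    using L zsU zsl fr unfolding legendre_def essentially_smooth_def by blast
  then have "eventually (\<lambda>n. B + 1 \<le> norm (g (zs n))) sequentially"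
    unfolding filterlim_at_top by blast
  then obtain n where "B + 1 \<le> norm (g (zs n))" unfolding eventually_sequentially by blast
  moreover have "norm (g (zs n)) \<le> B" using bound[OF ts[of n]] by (simp add: zs_def)
  ultimately show False by simp
qed

end


context leg begin

lemma unique_min:
  assumes y: "y \<in> U" and C: "convex C" and z1: "z1 \<in> C" "z1 \<in> U" and z2: "z2 \<in> C" "z2 \<in> U"
    and m1: "\<And>w. w \<in> C \<Longrightarrow> w \<in> U \<Longrightarrow> Dr z1 y \<le> Dr w y"
    and m2: "\<And>w. w \<in> C \<Longrightarrow> w \<in> U \<Longrightarrow> Dr z2 y \<le> Dr w y"
  shows "z1 = z2"
proof (rule ccontr)
  assume ne: "z1 \<noteq> z2"
  define m where "m = (1 - 1/2) *\<^sub>R z1 + (1/2::real) *\<^sub>R z2"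
  have mC: "m \<in> C" using convex_alt[THEN iffD1, OF C, rule_format, of z1 z2 "1/2"] z1 z2 by (simp add: m_def)
  have mU: "m \<in> U" using convex_alt[THEN iffD1, OF U_convex, rule_format, of z1 z2 "1/2"] z1 z2 by (simp add: m_def)
  have s: "f m < (1 - 1/2) * f z1 + (1/2) * f z2" using strict[OF z1(2) z2(2) ne, of "1/2"] by (simp add: m_def)
  then have s': "f m < (1/2) * f z1 + (1/2) * f z2" by simp
  have gm: "g y \<bullet> m = (1/2) * (g y \<bullet> z1) + (1/2) * (g y \<bullet> z2)"
    by (simp add: m_def inner_add_right)
  have "Dr z1 y \<le> Dr m y" "Dr z2 y \<le> Dr m y" using m1[OF mC mU] m2[OF mC mU] by auto
  then show False using s' gm by (simp add: inner_diff_right)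
qed

lemma VI:
  assumes y: "y \<in> U" and C: "convex C" and z: "z \<in> C" "z \<in> U"
    and mn: "\<And>w. w \<in> C \<Longrightarrow> w \<in> U \<Longrightarrow> Dr z y \<le> Dr w y" and x: "x \<in> C"
  shows "(g z - g y) \<bullet> (x - z) \<ge> 0"
proof -
  obtain r where r: "r > 0" "ball z r \<subseteq> U" using z(2) U_open openE by blast
  define d where "d = x - z"
  define T where "T = min 1 (r / (norm d + 1))"
  have nd: "norm d + 1 > 0" using norm_ge_zero[of d] by linarith
  have T: "T > 0" using r nd by (simp add: T_def)
  have "g z \<bullet> d \<ge> g y \<bullet> d"
  proof (rule dir_lower[OF grad[OF z(2)] T])
    fix t :: real assume t: "0 < t" "t \<le> T"
    define zt where "zt = z + t *\<^sub>R d"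
    have "zt = (1 - t) *\<^sub>R z + t *\<^sub>R x" by (simp add: zt_def d_def algebra_simps)
    moreover have "t \<le> 1" using t by (simp add: T_def)
    ultimately have ztC: "zt \<in> C" using C z(1) x t unfolding convex_alt by simp
    have "norm (t *\<^sub>R d) = t * norm d" using t by simp
    also have "\<dots> \<le> t * (norm d + 1)" using t by simp
    also have "\<dots> \<le> r / (norm d + 1) * (norm d + 1)" using t nd by (intro mult_right_mono) (auto simp: T_def)
    also have "\<dots> < r * 2" using nd r by simp
    finally have "norm (t *\<^sub>R d) < r * 2" .
    have "norm (t *\<^sub>R d) < r"
    proof -
      have "t * (norm d + 1) \<le> r / (norm d + 1) * (norm d + 1)"
        using t nd by (intro mult_right_mono) (auto simp: T_def)
      also have "\<dots> = r" using nd by simp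
      finally have "t * norm d + t \<le> r" by (simp add: algebra_simps)
      then show ?thesis using t by simp
    qed
    then have ztU: "zt \<in> U" using r by (auto simp: zt_def dist_norm)
    have "Dr z y \<le> Dr zt y" using mn[OF ztC ztU] .
    moreover have "zt - y = (z - y) + t *\<^sub>R d" by (simp add: zt_def)
    ultimately show "f (z + t *\<^sub>R d) - f z \<ge> t * (g y \<bullet> d)"
      by (simp add: zt_def inner_add_right algebra_simps)
  qed
  then show ?thesis by (simp add: d_def inner_diff_left)
qed

lemma proj_props:
  assumes y: "y \<in> U" and C: "closed C" "convex C" and c: "c \<in> C" "c \<in> U"
  shows "bregman_proj \<Phi> y C \<in> C \<and> bregman_proj \<Phi> y C \<in> U \<and>
         (\<forall>w\<in>C. w \<in> edom \<Phi> \<longrightarrow> Dr (bregman_proj \<Phi> y C) y \<le> Dr w y)"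
proof -
  define P where "P z \<longleftrightarrow> z \<in> C \<and> (\<forall>w\<in>C. bregman \<Phi> z y \<le> bregman \<Phi> w y)" for z
  have good: "z \<in> U \<and> (\<forall>w\<in>C. w \<in> edom \<Phi> \<longrightarrow> Dr z y \<le> Dr w y)" if Pz: "P z" for z
  proof -
    have zC: "z \<in> C" using Pz by (simp add: P_def)
    have "bregman \<Phi> z y \<le> bregman \<Phi> c y" using Pz c by (simp add: P_def)
    then have zd: "z \<in> edom \<Phi>" using bregman_eq[OF y] U_dom[OF c(2)] by (cases "z \<in> edom \<Phi>") auto
    have mn: "Dr z y \<le> Dr w y" if "w \<in> C" "w \<in> edom \<Phi>" for w
      using Pz that zd bregman_eq[OF y] by (auto simp: P_def)
    have "z \<in> U" using interior_min[OF y C(2) c zC zd] mn U_dom by blast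
    then show ?thesis using mn by blast
  qed
  obtain z0 where z0: "P z0" using exists_min[OF y C(1) c] by (auto simp: P_def)
  have "bregman_proj \<Phi> y C = z0"
    unfolding bregman_proj_def
  proof (rule the_equality)
    show "z0 \<in> C \<and> (\<forall>w\<in>C. bregman \<Phi> z0 y \<le> bregman \<Phi> w y)" using z0 by (simp add: P_def)
    fix z assume "z \<in> C \<and> (\<forall>w\<in>C. bregman \<Phi> z y \<le> bregman \<Phi> w y)"
    then have Pz: "P z" by (simp add: P_def)
    show "z = z0"
      using unique_min[OF y C(2), of z z0] good[OF Pz] good[OF z0] Pz z0 U_dom by (auto simp: P_def)
  qed
  then show ?thesis using good[OF z0] z0 by (simp add: P_def)
qed

end



theorem mainTheorem6:
  fixes \<Phi> :: "'a::euclidean_space \<Rightarrow> ereal" and C :: "'a set"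
  assumes "Gamma0 \<Phi>" and "legendre \<Phi>"
    and "closed C" and "convex C" and "C \<inter> interior (edom \<Phi>) \<noteq> {}"
    and "\<exists>x \<in> edom \<Phi> \<inter> C. coercive (bregman \<Phi> x)"
  shows "continuous_on (interior (edom \<Phi>)) (\<lambda>y. bregman_proj \<Phi> y C)"
proof -
  interpret leg \<Phi> using assms(1,2) by unfold_locales
  obtain c where c: "c \<in> C" "c \<in> U" using assms(5) by blast
  obtain x where x: "x \<in> edom \<Phi>" "x \<in> C" and coer: "coercive (bregman \<Phi> x)" using assms(6) by blast
  define p where "p y = bregman_proj \<Phi> y C" for y
  have P: "p y \<in> C" "p y \<in> U" "\<And>w. w \<in> C \<Longrightarrow> w \<in> edom \<Phi> \<Longrightarrow> Dr (p y) y \<le> Dr w y"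
    if "y \<in> U" for y
    using proj_props[OF that assms(3,4) c] by (auto simp: p_def)
  have TP: "Dr w y \<ge> Dr w (p y) + Dr (p y) y" if y: "y \<in> U" and w: "w \<in> C" for y w
  proof -
    have "(g (p y) - g y) \<bullet> (w - p y) \<ge> 0"
      by (rule VI[OF y assms(4) P(1,2)[OF y] _ w]) (use P(3)[OF y] U_dom in blast)
    then show ?thesis by (simp add: inner_diff_left inner_diff_right algebra_simps)
  qed
  have fc: "((\<lambda>n. f (ys n)) \<longlongrightarrow> f y0) sequentially" "(g \<circ> ys) \<longlonglongrightarrow> g y0"
    if "\<forall>n. ys n \<in> U" "y0 \<in> U" "ys \<longlonglongrightarrow> y0" for ys y0
    using continuous_on_tendsto_compose[OF f_cont, of ys y0] continuous_on_tendsto_compose[OF g_cont, of ys y0] that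
    by (auto simp: o_def)
  show ?thesis
    unfolding p_def[symmetric]
  proof (rule continuous_on_sequentiallyI)
    fix ys y0 assume ys: "\<forall>n. ys n \<in> U" and y0: "y0 \<in> U" and lim: "ys \<longlonglongrightarrow> y0"
    define zs where "zs n = p (ys n)" for n
    define z0 where "z0 = p y0"
    have zsC: "zs n \<in> C" "zs n \<in> U" for n using P ys by (auto simp: zs_def)
    have z0C: "z0 \<in> C" "z0 \<in> U" using P y0 by (auto simp: z0_def)
    have fy: "(\<lambda>n. f (ys n)) \<longlonglongrightarrow> f y0" and gy: "(\<lambda>n. g (ys n)) \<longlonglongrightarrow> g y0"
      using fc[OF ys y0 lim] by (auto simp: o_def)
    have Drlim: "(\<lambda>n. Dr w (ys n)) \<longlonglongrightarrow> Dr w y0" for w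
      by (intro tendsto_intros fy gy lim)
    have "(bregman \<Phi> x \<longlongrightarrow> \<infinity>) at_infinity" using coer by (simp add: coercive_def)
    then have "eventually (\<lambda>z. ereal (Dr x y0 + 1) < bregman \<Phi> x z) at_infinity"
      unfolding tendsto_PInfty by blast
    then obtain b where b: "\<And>z. b \<le> norm z \<Longrightarrow> ereal (Dr x y0 + 1) < bregman \<Phi> x z"
      unfolding eventually_at_infinity by blast
    have "eventually (\<lambda>n. Dr x (ys n) < Dr x y0 + 1) sequentially"
      using order_tendstoD(2)[OF Drlim[of x], of "Dr x y0 + 1"] by simp
    then have bnd: "eventually (\<lambda>n. norm (zs n) < b) sequentially"
    proof (rule eventually_mono)
      fix n assume less: "Dr x (ys n) < Dr x y0 + 1"
      show "norm (zs n) < b"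
      proof (rule ccontr)
        assume "\<not> ?thesis"
        then have "ereal (Dr x y0 + 1) < bregman \<Phi> x (zs n)" using b by simp
        then have "Dr x y0 + 1 < Dr x (zs n)" using bregman_eq[OF zsC(2)[of n]] x(1) by simp
        moreover have "Dr x (ys n) \<ge> Dr x (zs n) + Dr (zs n) (ys n)"
          using TP[OF ys[rule_format] x(2)] by (simp add: zs_def)
        moreover have "Dr (zs n) (ys n) \<ge> 0" using Dr_nonneg ys U_dom zsC by blast
        ultimately show False using less by linarith
      qed
    qed
    define e where "e n = (f (ys n) - f y0 - g y0 \<bullet> (ys n - y0)) + (g (ys n) - g y0) \<bullet> (zs n - ys n)" for n
    have e1: "(\<lambda>n. f (ys n) - f y0 - g y0 \<bullet> (ys n - y0)) \<longlonglongrightarrow> f y0 - f y0 - g y0 \<bullet> (y0 - y0)"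
      by (intro tendsto_intros fy lim)
    have e2: "(\<lambda>n. (g (ys n) - g y0) \<bullet> (zs n - ys n)) \<longlonglongrightarrow> 0"
    proof (rule Lim_null_comparison)
      show "eventually (\<lambda>n. norm ((g (ys n) - g y0) \<bullet> (zs n - ys n)) \<le> norm (g (ys n) - g y0) * (b + norm (ys n))) sequentially"
        using bnd
      proof (rule eventually_mono)
        fix n assume "norm (zs n) < b"
        have "norm ((g (ys n) - g y0) \<bullet> (zs n - ys n)) \<le> norm (g (ys n) - g y0) * norm (zs n - ys n)"
          by (simp add: Cauchy_Schwarz_ineq2)
        also have "\<dots> \<le> norm (g (ys n) - g y0) * (b + norm (ys n))"
          using \<open>norm (zs n) < b\<close> norm_triangle_ineq4[of "zs n" "ys n"]
          by (intro mult_left_mono) auto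
        finally show "norm ((g (ys n) - g y0) \<bullet> (zs n - ys n)) \<le> norm (g (ys n) - g y0) * (b + norm (ys n))" .
      qed
      have "(\<lambda>n. norm (g (ys n) - g y0) * (b + norm (ys n))) \<longlonglongrightarrow> norm (g y0 - g y0) * (b + norm y0)"
        by (intro tendsto_intros gy lim)
      then show "(\<lambda>n. norm (g (ys n) - g y0) * (b + norm (ys n))) \<longlonglongrightarrow> 0" by simp
    qed
    have elim: "e \<longlonglongrightarrow> 0" unfolding e_def using tendsto_add[OF e1 e2] by simp
    have ident: "Dr (zs n) y0 - Dr (zs n) (ys n) = e n" for n
      by (simp add: e_def inner_diff_left inner_diff_right algebra_simps)
    have up: "Dr (zs n) z0 \<le> e n + (Dr z0 (ys n) - Dr z0 y0)" for n
    proof -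
      have "Dr (zs n) y0 \<ge> Dr (zs n) z0 + Dr z0 y0" using TP[OF y0 zsC(1)[of n]] by (simp add: z0_def)
      moreover have "Dr z0 (ys n) \<ge> Dr z0 (zs n) + Dr (zs n) (ys n)"
        using TP[OF ys[rule_format] z0C(1)] by (simp add: zs_def)
      moreover have "Dr z0 (zs n) \<ge> 0" using Dr_nonneg zsC(2) U_dom[OF z0C(2)] by blast
      ultimately show ?thesis using ident[of n] by linarith
    qed
    have lo: "Dr (zs n) z0 \<ge> 0" for n using Dr_nonneg z0C(2) U_dom[OF zsC(2)] by blast
    have uplim: "(\<lambda>n. e n + (Dr z0 (ys n) - Dr z0 y0)) \<longlonglongrightarrow> 0 + (Dr z0 y0 - Dr z0 y0)"
      by (intro tendsto_intros elim Drlim)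
    have Dlim: "(\<lambda>n. Dr (zs n) z0) \<longlonglongrightarrow> 0"
      by (rule tendsto_sandwich[of "\<lambda>_. 0" _ _ "\<lambda>n. e n + (Dr z0 (ys n) - Dr z0 y0)"])
         (use lo up uplim in auto)
    show "(\<lambda>n. p (ys n)) \<longlonglongrightarrow> p y0"
      unfolding zs_def[symmetric] z0_def[symmetric] tendsto_iff
    proof (intro allI impI)
      fix \<epsilon> :: real assume \<epsilon>: "\<epsilon> > 0"
      obtain \<delta> where \<delta>: "\<delta> > 0" "\<And>z. z \<in> edom \<Phi> \<Longrightarrow> norm (z - z0) \<ge> \<epsilon> \<Longrightarrow> Dr z z0 \<ge> \<delta> * norm (z - z0) / \<epsilon>"
        using sphere_lemma[OF z0C(2) \<epsilon>] by blast
      have "eventually (\<lambda>n. Dr (zs n) z0 < \<delta>) sequentially"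
        using order_tendstoD(2)[OF Dlim \<delta>(1)] .
      then show "eventually (\<lambda>n. dist (zs n) z0 < \<epsilon>) sequentially"
      proof (rule eventually_mono)
        fix n assume sm: "Dr (zs n) z0 < \<delta>"
        show "dist (zs n) z0 < \<epsilon>"
        proof (rule ccontr)
          assume "\<not> ?thesis"
          then have ge: "norm (zs n - z0) \<ge> \<epsilon>" by (simp add: dist_norm)
          then have "Dr (zs n) z0 \<ge> \<delta> * norm (zs n - z0) / \<epsilon>" using \<delta>(2) U_dom zsC(2) by blast
          moreover have "\<delta> * norm (zs n - z0) / \<epsilon> \<ge> \<delta>" using ge \<epsilon> \<delta>(1) by (simp add: field_simps)
          ultimately show False using sm by linarith
        qed
      qed
    qed
  qed
qed


end
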